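(* Let $I$ be a finite set of positive integers and $m=\max(I\cup\{0\})$. Then $(-1)^m d(I;-1)\ge 0$. Equivalently, if $d(I;n)=\sum_{k=0}^m(-1)^{m-k}c_k(I)\binom{n+1}{k}$ is the expansion of the descent polynomial in the basis $\{\binom{n+1}{k}\}_{k\ge 0}$, then $c_0(I)\ge 0$.
   Context: For $n>m$, $d(I;n)$ is the number of permutations $\pi\in\mathfrak S_n$ with $\{i\mid\pi_i>\pi_{i+1}\}=I$; it is a polynomial in $n$ of degree $m$, extended to all complex arguments, and $d(I;-1)$ is its value at $-1$ (note $d(I;-1)=(-1)^m c_0(I)$). *)

theory Defs
  imports "HOL-Combinatorics.Permutations" "HOL-Computational_Algebra.Polynomial"
begin

definition descent_set :: "nat \<Rightarrow> (nat \<Rightarrow> nat) \<Rightarrow> nat set" where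
  "descent_set n \<pi> = {i \<in> {1..<n}. \<pi> i > \<pi> (Suc i)}"

definition dcount :: "nat set \<Rightarrow> nat \<Rightarrow> nat" where
  "dcount I n = card {\<pi>. \<pi> permutes {1..n} \<and> descent_set n \<pi> = I}"

definition descent_poly :: "nat set \<Rightarrow> real poly" where
  "descent_poly I = (THE p. \<forall>n > Max (I \<union> {0}). poly p (real n) = real (dcount I n))"

end

theory Submission
  imports Defs "HOL-Library.Infinite_Set"
begin


definition ldes :: "nat list \<Rightarrow> nat set" where
  "ldes xs = {i. 0 < i \<and> i < length xs \<and> xs!i < xs!(i-1)}"

lemma ldes_map:
  assumes "strict_mono_on A f" "set xs \<subseteq> A"
  shows "ldes (map f xs) = ldes xs"
proof -
  have "\<And>i. 0 < i \<Longrightarrow> i < length xs \<Longrightarrow> (f (xs!i) < f (xs!(i-1))) = (xs!i < xs!(i-1))"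
  proof -
    fix i assume "0 < i" "i < length xs"
    then have "xs!i \<in> A" "xs!(i-1) \<in> A" using assms(2) by auto
    then show "(f (xs!i) < f (xs!(i-1))) = (xs!i < xs!(i-1))"
      using assms(1) by (metis strict_mono_on_less)
  qed
  then show ?thesis unfolding ldes_def by auto
qed

lemma strict_mono_on_inv_into:
  fixes f :: "nat \<Rightarrow> nat"
  assumes "strict_mono_on A f" "bij_betw f A B"
  shows "strict_mono_on B (inv_into A f)"
proof (rule strict_mono_onI)
  fix x y assume xy: "x \<in> B" "y \<in> B" "x < y"
  obtain a where a: "a \<in> A" "f a = x" using xy assms(2) by (auto simp: bij_betw_def)
  obtain b where b: "b \<in> A" "f b = y" using xy assms(2) by (auto simp: bij_betw_def)
  have ia: "inv_into A f x = a" "inv_into A f y = b" using a b assms(2)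
    by (auto simp: bij_betw_def inv_into_f_f)
  have "a < b"
  proof (rule ccontr)
    assume "\<not> a < b"
    then have "b \<le> a" by simp
    then have "f b \<le> f a" using a b assms(1)
      by (metis order_le_less strict_mono_on_less)
    then show False using a b xy by simp
  qed
  then show "inv_into A f x < inv_into A f y" using ia by simp
qed

lemma exists_iso:
  fixes A B :: "nat set"
  assumes "finite A" "finite B" "card A = card B"
  obtains f where "strict_mono_on A f" "bij_betw f A B"
proof -
  obtain g where g: "bij_betw g {..<card A} A" "strict_mono_on {..<card A} g"
    using ex_bij_betw_strict_mono_card[OF assms(1)] by blast
  obtain h where h: "bij_betw h {..<card B} B" "strict_mono_on {..<card B} h"
    using ex_bij_betw_strict_mono_card[OF assms(2)] by blast
  let ?f = "h \<circ> inv_into {..<card A} g"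
  have "bij_betw (inv_into {..<card A} g) A {..<card A}" using g(1) bij_betw_inv_into by blast
  then have b: "bij_betw ?f A B" using h(1) assms(3) bij_betw_trans by fastforce
  have s1: "strict_mono_on A (inv_into {..<card A} g)"
    using strict_mono_on_inv_into g by blast
  have "strict_mono_on A ?f"
  proof (rule strict_mono_onI)
    fix x y assume "x \<in> A" "y \<in> A" "x < y"
    then have "inv_into {..<card A} g x < inv_into {..<card A} g y"
      "inv_into {..<card A} g x \<in> {..<card B}" "inv_into {..<card A} g y \<in> {..<card B}"
      using s1 g(1) assms(3) by (auto simp: strict_mono_on_def bij_betw_def inv_into_into)
    then show "?f x < ?f y" using h(2) by (auto simp: strict_mono_on_def)
  qed
  then show ?thesis using b that by blast
qed

definition arr :: "nat set \<Rightarrow> nat set \<Rightarrow> nat list set" where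
  "arr A D = {ys. distinct ys \<and> set ys = A \<and> ldes ys = D}"

lemma arr_card_eq:
  assumes "finite A" "finite B" "card A = card B"
  shows "card (arr A D) = card (arr B D)"
proof -
  obtain f where f: "strict_mono_on A f" "bij_betw f A B" using exists_iso assms by blast
  let ?g = "inv_into A f"
  have g: "strict_mono_on B ?g" "bij_betw ?g B A"
    using strict_mono_on_inv_into f bij_betw_inv_into by blast+
  show ?thesis
  proof (rule bij_betw_same_card[of "map f"], rule bij_betw_byWitness[where f'="map ?g"])
    show "\<forall>a\<in>arr A D. map ?g (map f a) = a"
      using f(2) by (auto simp: arr_def bij_betw_def map_idI inv_into_f_f)
    show "\<forall>a\<in>arr B D. map f (map ?g a) = a"
    proof
      fix a assume "a \<in> arr B D"
      then have "set a \<subseteq> f ` A" using f(2) by (auto simp: arr_def bij_betw_def)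
      then show "map f (map ?g a) = a" by (induction a) (auto simp: f_inv_into_f)
    qed
    show "map f ` arr A D \<subseteq> arr B D"
      using f by (auto simp: arr_def bij_betw_def distinct_map ldes_map inj_on_subset)
    show "map ?g ` arr B D \<subseteq> arr A D"
      using g by (auto simp: arr_def bij_betw_def distinct_map ldes_map inj_on_subset)
  qed
qed

lemma count_sub:
  assumes "finite B"
  shows "card {ys. distinct ys \<and> length ys = m \<and> set ys \<subseteq> B \<and> ldes ys = J}
         = (card B choose m) * card (arr {1..m} J)"
proof -
  have eq: "{ys. distinct ys \<and> length ys = m \<and> set ys \<subseteq> B \<and> ldes ys = J}
        = (\<Union>A\<in>{A. A \<subseteq> B \<and> card A = m}. arr A J)"
    by (auto simp: arr_def distinct_card)
  have fin: "finite {A. A \<subseteq> B \<and> card A = m}" using assms by auto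
  have finA: "\<And>A. A \<in> {A. A \<subseteq> B \<and> card A = m} \<Longrightarrow> finite (arr A J)"
  proof -
    fix A assume "A \<in> {A. A \<subseteq> B \<and> card A = m}"
    then have "finite A" using assms finite_subset by auto
    then have "finite {ys. set ys \<subseteq> A \<and> length ys \<le> card A}"
      using finite_lists_length_le by blast
    moreover have "arr A J \<subseteq> {ys. set ys \<subseteq> A \<and> length ys \<le> card A}"
      by (auto simp: arr_def distinct_card)
    ultimately show "finite (arr A J)" using finite_subset by blast
  qed
  have "card (\<Union>A\<in>{A. A \<subseteq> B \<and> card A = m}. arr A J)
      = (\<Sum>A\<in>{A. A \<subseteq> B \<and> card A = m}. card (arr A J))"
    using fin finA by (intro card_UN_disjoint) (auto simp: arr_def)
  also have "\<dots> = (\<Sum>A\<in>{A. A \<subseteq> B \<and> card A = m}. card (arr {1..m} J))"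
  proof (rule sum.cong[OF refl])
    fix A assume "A \<in> {A. A \<subseteq> B \<and> card A = m}"
    then show "card (arr A J) = card (arr {1..m} J)"
      using assms finite_subset by (intro arr_card_eq) auto
  qed
  also have "\<dots> = (card B choose m) * card (arr {1..m} J)"
    using n_subsets[OF assms] by simp
  finally show ?thesis using eq by simp
qed

declare upt_Suc[simp del]

lemma dcount_arr: "dcount I n = card (arr {1..n} I)"
proof -
  let ?P = "{\<pi>. \<pi> permutes {1..n} \<and> descent_set n \<pi> = I}"
  let ?phi = "\<lambda>\<pi>. map \<pi> [1..<Suc n]"
  let ?psi = "\<lambda>xs x. if x \<in> {1..n} then xs!(x-1) else (x::nat)"
  have des: "ldes (?phi \<pi>) = descent_set n \<pi>" for \<pi>
  proof -
    have "\<And>i. 0 < i \<Longrightarrow> i < n \<Longrightarrow> ?phi \<pi> ! i = \<pi> (Suc i) \<and> ?phi \<pi> ! (i-1) = \<pi> i"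
      by (auto simp: nth_map)
    then show ?thesis unfolding ldes_def descent_set_def
      by (auto simp: Suc_le_eq)
  qed
  show ?thesis unfolding dcount_def
  proof (rule bij_betw_same_card[of ?phi], rule bij_betw_byWitness[where f'="?psi"])
    show "\<forall>a\<in>?P. ?psi (?phi a) = a"
    proof
      fix a assume "a \<in> ?P"
      then have p: "a permutes {1..n}" by simp
      show "?psi (?phi a) = a"
      proof
        fix x show "?psi (?phi a) x = a x"
          using permutes_not_in[OF p, of x] by (auto simp: nth_map)
      qed
    qed
    show "\<forall>xs\<in>arr {1..n} I. ?phi (?psi xs) = xs"
    proof
      fix xs assume "xs \<in> arr {1..n} I"
      then have l: "length xs = n" unfolding arr_def using distinct_card by fastforce
      show "?phi (?psi xs) = xs"
        by (rule nth_equalityI) (auto simp: l nth_map)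
    qed
    show "?phi ` ?P \<subseteq> arr {1..n} I"
    proof
      fix xs assume "xs \<in> ?phi ` ?P"
      then obtain \<pi> where p: "\<pi> permutes {1..n}" "descent_set n \<pi> = I" and xs: "xs = ?phi \<pi>" by blast
      have "distinct xs" unfolding xs using permutes_inj_on[OF p(1)]
        by (simp add: distinct_map inj_on_subset atLeastLessThanSuc_atLeastAtMost)
      moreover have "set xs = {1..n}" unfolding xs using permutes_image[OF p(1)]
        by (simp add: atLeastLessThanSuc_atLeastAtMost)
      ultimately show "xs \<in> arr {1..n} I" using des p(2) xs by (simp add: arr_def)
    qed
    show "?psi ` arr {1..n} I \<subseteq> ?P"
    proof
      fix f assume "f \<in> ?psi ` arr {1..n} I"
      then obtain xs where xs: "xs \<in> arr {1..n} I" and f: "f = ?psi xs" by blast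
      then have d: "distinct xs" and s: "set xs = {1..n}" and dd: "ldes xs = I" by (auto simp: arr_def)
      have l: "length xs = n" using d s distinct_card by fastforce
      have inj: "inj_on f {1..n}"
      proof (rule inj_onI)
        fix x y assume "x \<in> {1..n}" "y \<in> {1..n}" "f x = f y"
        then have "xs!(x-1) = xs!(y-1)" "x - 1 < length xs" "y - 1 < length xs" using f l by auto
        then have "x - 1 = y - 1" using d nth_eq_iff_index_eq by blast
        then show "x = y" using \<open>x \<in> {1..n}\<close> \<open>y \<in> {1..n}\<close> by auto
      qed
      have img: "f ` {1..n} = {1..n}"
      proof -
        have "f ` {1..n} = (\<lambda>x. xs!(x-1)) ` {1..n}" using f by auto
        also have "\<dots> = (\<lambda>i. xs!i) ` {0..<n}"
        proof
          show "(\<lambda>x. xs!(x-1)) ` {1..n} \<subseteq> (\<lambda>i. xs!i) ` {0..<n}" by force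
          show "(\<lambda>i. xs!i) ` {0..<n} \<subseteq> (\<lambda>x. xs!(x-1)) ` {1..n}"
          proof
            fix y assume "y \<in> (\<lambda>i. xs!i) ` {0..<n}"
            then obtain i where "i < n" "y = xs!i" by auto
            then show "y \<in> (\<lambda>x. xs!(x-1)) ` {1..n}" by (intro image_eqI[of _ _ "Suc i"]) auto
          qed
        qed
        also have "\<dots> = set xs" using l by (auto simp: set_conv_nth)
        finally show ?thesis using s by simp
      qed
      have perm: "f permutes {1..n}"
        by (rule bij_imp_permutes) (use inj img f in \<open>auto simp: bij_betw_def\<close>)
      have "?phi f = xs" using l f by (intro nth_equalityI) (auto simp: nth_map)
      then have "descent_set n f = I" using des[of f] dd by simp
      then show "f \<in> ?P" using perm by simp
    qed
  qed
qed


lemma ldes_sub: "ldes xs \<subseteq> {1..<length xs}"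
  by (auto simp: ldes_def)

lemma ldes_take: "i < m \<Longrightarrow> m \<le> length xs \<Longrightarrow> (i \<in> ldes (take m xs)) = (i \<in> ldes xs)"
  unfolding ldes_def by simp

lemma ldes_drop: "m \<le> length xs \<Longrightarrow> (i \<in> ldes (drop m xs)) = (i + m \<in> ldes xs \<and> 0 < i)"
proof -
  assume "m \<le> length xs"
  have "0 < i \<Longrightarrow> drop m xs ! (i - 1) = xs ! (i + m - 1)" if "i < length xs - m"
    using that by (simp add: nth_drop add.commute)
  moreover have "i < length xs - m \<Longrightarrow> drop m xs ! i = xs ! (i + m)"
    by (simp add: nth_drop add.commute)
  ultimately show ?thesis unfolding ldes_def
    using \<open>m \<le> length xs\<close> by auto
qed

lemma ldes_empty_iff: "(ldes zs = {}) = (\<forall>i. Suc i < length zs \<longrightarrow> zs!i \<le> zs!(Suc i))"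
proof
  assume h: "ldes zs = {}"
  show "\<forall>i. Suc i < length zs \<longrightarrow> zs!i \<le> zs!(Suc i)"
  proof (intro allI impI)
    fix i assume "Suc i < length zs"
    then have "Suc i \<notin> ldes zs" using h by simp
    then show "zs!i \<le> zs!(Suc i)" using \<open>Suc i < length zs\<close> unfolding ldes_def by simp
  qed
next
  assume h: "\<forall>i. Suc i < length zs \<longrightarrow> zs!i \<le> zs!(Suc i)"
  show "ldes zs = {}"
  proof (rule ccontr)
    assume "ldes zs \<noteq> {}"
    then obtain i where "0 < i" "i < length zs" "zs!i < zs!(i-1)" unfolding ldes_def by blast
    moreover obtain j where "i = Suc j" using \<open>0 < i\<close> gr0_conv_Suc by blast
    ultimately show False using h by auto
  qed
qed

lemma ldes_sorted: "(ldes zs = {}) = sorted zs"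
  by (simp add: ldes_empty_iff sorted_iff_nth_Suc)

lemma ldes_snoc_big:
  assumes "\<forall>x\<in>set xs. x < a" shows "ldes (xs @ [a]) = ldes xs"
proof -
  have h: "\<And>i. i < length xs \<Longrightarrow> xs!i < a" using assms nth_mem by blast
  have "i \<in> ldes (xs @ [a]) \<longleftrightarrow> i \<in> ldes xs" for i
  proof (cases "i < length xs")
    case True then show ?thesis by (auto simp: ldes_def nth_append)
  next
    case False
    have "i \<notin> ldes xs" using False by (auto simp: ldes_def)
    moreover have "i \<notin> ldes (xs @ [a])"
    proof
      assume "i \<in> ldes (xs @ [a])"
      then have i: "i = length xs" "0 < i" and lt: "(xs @ [a])!i < (xs @ [a])!(i-1)"
        using False by (auto simp: ldes_def)
      then have "a < xs!(i-1)" by (auto simp: nth_append)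
      with h[of "i-1"] i show False by auto
    qed
    ultimately show ?thesis by blast
  qed
  then show ?thesis by blast
qed

lemma arr_length: "xs \<in> arr {1..n} K \<Longrightarrow> length xs = n"
  unfolding arr_def using distinct_card by fastforce

lemma finite_arr: "finite (arr {1..n} K)"
proof -
  have "arr {1..n} K \<subseteq> {ys. set ys \<subseteq> {1..n} \<and> length ys \<le> n}"
    using arr_length by (auto simp: arr_def)
  moreover have "finite {ys. set ys \<subseteq> {1..n} \<and> length ys \<le> n}"
    using finite_lists_length_le by blast
  ultimately show ?thesis using finite_subset by blast
qed

lemma dcount_mono_step: "dcount K n \<le> dcount K (Suc n)"
proof -
  have "card (arr {1..n} K) \<le> card (arr {1..Suc n} K)"
  proof (rule card_inj_on_le[of "\<lambda>xs. xs @ [Suc n]"])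
    show "inj_on (\<lambda>xs. xs @ [Suc n]) (arr {1..n} K)" by (auto intro: inj_onI)
    show "finite (arr {1..Suc n} K)" by (rule finite_arr)
    show "(\<lambda>xs. xs @ [Suc n]) ` arr {1..n} K \<subseteq> arr {1..Suc n} K"
    proof
      fix ys assume "ys \<in> (\<lambda>xs. xs @ [Suc n]) ` arr {1..n} K"
      then obtain xs where xs: "xs \<in> arr {1..n} K" "ys = xs @ [Suc n]" by blast
      then have "\<forall>x\<in>set xs. x < Suc n" by (auto simp: arr_def)
      then show "ys \<in> arr {1..Suc n} K" using xs ldes_snoc_big[of xs "Suc n"]
        by (auto simp: arr_def)
    qed
  qed
  then show ?thesis by (simp add: dcount_arr)
qed

lemma dcount_mono: "n \<le> n' \<Longrightarrow> dcount K n \<le> dcount K n'"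
proof (induction n' rule: dec_induct)
  case base then show ?case by simp
next
  case (step n') then show ?case using dcount_mono_step[of K n'] by simp
qed




lemma set_split_aux:
  fixes m :: nat
  assumes "J \<subseteq> {..<m}"
  shows "(D \<inter> {..<m} = J \<and> D \<subseteq> {..m}) \<longleftrightarrow> (D = insert m J \<or> D = J)"
proof
  assume h: "D \<inter> {..<m} = J \<and> D \<subseteq> {..m}"
  show "D = insert m J \<or> D = J"
  proof (cases "m \<in> D")
    case True
    have "D = insert m J"
    proof
      show "D \<subseteq> insert m J"
      proof
        fix x assume x: "x \<in> D"
        then have "x \<le> m" using h by auto
        show "x \<in> insert m J"
        proof (cases "x = m")
          case False
          then have "x < m" using \<open>x \<le> m\<close> by simp
          then show ?thesis using h x by blast
        qed simp
      qed
      show "insert m J \<subseteq> D" using h True by auto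
    qed
    then show ?thesis by blast
  next
    case False
    have "D = J"
    proof
      show "D \<subseteq> J"
      proof
        fix x assume x: "x \<in> D"
        then have "x \<le> m" "x \<noteq> m" using h False by auto
        then have "x < m" by simp
        then show "x \<in> J" using h x by blast
      qed
      show "J \<subseteq> D" using h by auto
    qed
    then show ?thesis by blast
  qed
next
  assume "D = insert m J \<or> D = J"
  then show "D \<inter> {..<m} = J \<and> D \<subseteq> {..m}" using assms by auto
qed

lemma split_char:
  assumes J: "J \<subseteq> {..<m}" and l: "m \<le> length xs"
  shows "(ldes (take m xs) = J \<and> sorted (drop m xs)) \<longleftrightarrow> (ldes xs = insert m J \<or> ldes xs = J)"
proof -
  have t: "ldes (take m xs) = ldes xs \<inter> {..<m}"
  proof -
    have "ldes (take m xs) \<subseteq> {..<m}" using ldes_sub[of "take m xs"] l by auto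
    then show ?thesis using ldes_take[OF _ l] by blast
  qed
  have d: "sorted (drop m xs) \<longleftrightarrow> ldes xs \<subseteq> {..m}"
  proof -
    have "sorted (drop m xs) \<longleftrightarrow> ldes (drop m xs) = {}" by (simp add: ldes_sorted)
    also have "\<dots> \<longleftrightarrow> (\<forall>i. \<not> (i + m \<in> ldes xs \<and> 0 < i))" using ldes_drop[OF l] by blast
    also have "\<dots> \<longleftrightarrow> ldes xs \<subseteq> {..m}"
    proof
      assume h: "\<forall>i. \<not> (i + m \<in> ldes xs \<and> 0 < i)"
      show "ldes xs \<subseteq> {..m}"
      proof
        fix k assume "k \<in> ldes xs"
        show "k \<in> {..m}"
        proof (rule ccontr)
          assume "k \<notin> {..m}"
          then have "(k - m) + m \<in> ldes xs \<and> 0 < k - m" using \<open>k \<in> ldes xs\<close> by auto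
          then show False using h by blast
        qed
      qed
    next
      assume "ldes xs \<subseteq> {..m}"
      then show "\<forall>i. \<not> (i + m \<in> ldes xs \<and> 0 < i)" by auto
    qed
    finally show ?thesis .
  qed
  show ?thesis using t d set_split_aux[OF J, of "ldes xs"] by simp
qed

lemma recur:
  assumes J: "J \<subseteq> {1..<m}" and mn: "m \<le> n"
  shows "dcount (insert m J) n + dcount J n = (n choose m) * dcount J m"
proof -
  define S where "S = {xs. distinct xs \<and> set xs = {1..n} \<and> ldes (take m xs) = J \<and> sorted (drop m xs)}"
  define Y where "Y = {ys. distinct ys \<and> length ys = m \<and> set ys \<subseteq> {1..n} \<and> ldes ys = J}"
  have J': "J \<subseteq> {..<m}" using J by auto
  have S_eq: "S = arr {1..n} (insert m J) \<union> arr {1..n} J"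
  proof -
    have "\<And>xs. distinct xs \<Longrightarrow> set xs = {1..n} \<Longrightarrow> m \<le> length xs"
      using mn distinct_card by fastforce
    then show ?thesis unfolding S_def arr_def using split_char[OF J'] by blast
  qed
  have disj: "arr {1..n} (insert m J) \<inter> arr {1..n} J = {}"
    using J by (auto simp: arr_def)
  have cS: "card S = dcount (insert m J) n + dcount J n"
    unfolding S_eq dcount_arr by (rule card_Un_disjoint[OF finite_arr finite_arr disj])
  have "card Y = card S"
  proof (rule bij_betw_same_card[of "\<lambda>ys. ys @ sorted_list_of_set ({1..n} - set ys)"],
         rule bij_betw_byWitness[where f'="take m"])
    show "\<forall>a\<in>Y. take m (a @ sorted_list_of_set ({1..n} - set a)) = a"
      by (auto simp: Y_def)
    show "\<forall>xs\<in>S. take m xs @ sorted_list_of_set ({1..n} - set (take m xs)) = xs"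
    proof
      fix xs assume xs: "xs \<in> S"
      then have d: "distinct xs" and s: "set xs = {1..n}" and so: "sorted (drop m xs)"
        by (auto simp: S_def)
      have split: "xs = take m xs @ drop m xs" by simp
      have "distinct (take m xs @ drop m xs)" using d by simp
      then have "set (take m xs) \<inter> set (drop m xs) = {}" by (simp only: distinct_append)
      moreover have "set xs = set (take m xs) \<union> set (drop m xs)"
        by (metis set_append split)
      ultimately have "set (drop m xs) = {1..n} - set (take m xs)" using s by blast
      then have "sorted_list_of_set ({1..n} - set (take m xs)) = sort (remdups (drop m xs))"
        by (metis sorted_list_of_set_sort_remdups)
      also have "\<dots> = drop m xs" using d so by (simp add: distinct_remdups_id sorted_sort_id)
      finally have "sorted_list_of_set ({1..n} - set (take m xs)) = drop m xs" .
      then show "take m xs @ sorted_list_of_set ({1..n} - set (take m xs)) = xs" by simp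
    qed
    show "(\<lambda>ys. ys @ sorted_list_of_set ({1..n} - set ys)) ` Y \<subseteq> S"
    proof
      fix xs assume "xs \<in> (\<lambda>ys. ys @ sorted_list_of_set ({1..n} - set ys)) ` Y"
      then obtain ys where ys: "ys \<in> Y" and xs: "xs = ys @ sorted_list_of_set ({1..n} - set ys)" by blast
      have "distinct xs" "set xs = {1..n}" using ys unfolding xs Y_def by auto
      moreover have "take m xs = ys" "drop m xs = sorted_list_of_set ({1..n} - set ys)"
        using ys unfolding xs Y_def by auto
      ultimately show "xs \<in> S" using ys unfolding S_def Y_def by auto
    qed
    show "take m ` S \<subseteq> Y"
    proof
      fix ys assume "ys \<in> take m ` S"
      then obtain xs where xs: "xs \<in> S" "ys = take m xs" by blast
      then have "m \<le> length xs" using mn distinct_card unfolding S_def by fastforce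
      then show "ys \<in> Y" using xs unfolding S_def Y_def
        by (auto dest: in_set_takeD)
    qed
  qed
  moreover have "card Y = (n choose m) * dcount J m"
    unfolding Y_def dcount_arr using count_sub[of "{1..n}" m J] by simp
  ultimately show ?thesis using cS by simp
qed


lemma lower:
  assumes J: "J \<subseteq> {1..<m}" and m1: "1 \<le> m" and mn: "m < n"
  shows "((n - 1) choose m) * dcount J m \<le> dcount (insert m J) n"
proof -
  define Y where "Y = {ys. distinct ys \<and> length ys = m \<and> set ys \<subseteq> {2..n} \<and> ldes ys = J}"
  define g where "g = (\<lambda>ys. ys @ 1 # sorted_list_of_set ({2..n} - set ys))"
  have J': "J \<subseteq> {..<m}" using J by auto
  have cY: "card Y = ((n - 1) choose m) * dcount J m"
    unfolding Y_def dcount_arr using count_sub[of "{2..n}" m J] by simp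
  have "card Y \<le> card (arr {1..n} (insert m J))"
  proof (rule card_inj_on_le[of g])
    show "inj_on g Y"
    proof (rule inj_onI)
      fix a b assume "a \<in> Y" "b \<in> Y" "g a = g b"
      then have "take m (g a) = take m (g b)" by simp
      then show "a = b" using \<open>a \<in> Y\<close> \<open>b \<in> Y\<close> by (simp add: g_def Y_def)
    qed
    show "finite (arr {1..n} (insert m J))" by (rule finite_arr)
    show "g ` Y \<subseteq> arr {1..n} (insert m J)"
    proof
      fix xs assume "xs \<in> g ` Y"
      then obtain ys where ys: "ys \<in> Y" and xs: "xs = g ys" by blast
      have ysd: "distinct ys" and ysl: "length ys = m" and yss: "set ys \<subseteq> {2..n}" and ysD: "ldes ys = J"
        using ys by (auto simp: Y_def)
      let ?zs = "sorted_list_of_set ({2..n} - set ys)"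
      have zset: "set ?zs = {2..n} - set ys" by simp
      have xs': "xs = ys @ 1 # ?zs" unfolding xs g_def by simp
      have n1: "1 \<notin> set ys" using yss by auto
      have n2: "1 \<notin> set ?zs" using zset by auto
      have dz: "distinct ?zs" by simp
      have dj: "set ys \<inter> set (1 # ?zs) = {}" using n1 zset by auto
      have dist: "distinct xs" unfolding xs' using ysd dz n2 dj by (simp only: distinct_append distinct.simps) simp
      have "set xs = set ys \<union> insert 1 ({2..n} - set ys)" unfolding xs' using zset by simp
      also have "\<dots> = insert 1 {2..n}" using yss by blast
      also have "\<dots> = {1..n}" using mn by auto
      finally have st: "set xs = {1..n}" .
      have tk: "take m xs = ys" and dr: "drop m xs = 1 # ?zs" using ysl unfolding xs g_def by auto
      have "sorted (1 # ?zs)" using zset by auto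
      moreover have "m \<le> length xs" using ysl unfolding xs g_def by simp
      ultimately have "ldes xs = insert m J \<or> ldes xs = J"
        using split_char[OF J', of xs] tk dr ysD by simp
      moreover have "m \<in> ldes xs"
      proof -
        have l: "m < length xs" using ysl unfolding xs g_def by simp
        have "xs ! m = 1" using ysl unfolding xs g_def by (simp add: nth_append)
        moreover have "xs ! (m - 1) = ys ! (m - 1)" using ysl m1 unfolding xs g_def by (simp add: nth_append)
        moreover have "ys ! (m - 1) \<in> {2..n}" 
        proof -
          have "m - 1 < length ys" using ysl m1 by simp
          then have "ys ! (m - 1) \<in> set ys" by (rule nth_mem)
          then show ?thesis using yss by blast
        qed
        ultimately have "xs ! m < xs ! (m - 1)" by simp
        then show ?thesis using l m1 unfolding ldes_def by simp
      qed
      moreover have "m \<notin> J" using J by auto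
      ultimately have "ldes xs = insert m J" by auto
      then show "xs \<in> arr {1..n} (insert m J)" using dist st by (simp add: arr_def)
    qed
  qed
  then show ?thesis using cY by (simp add: dcount_arr)
qed



lemma dcount_empty: "dcount {} n = 1"
proof -
  have "arr {1..n} {} = {sorted_list_of_set {1..n}}"
  proof
    show "arr {1..n} {} \<subseteq> {sorted_list_of_set {1..n}}"
    proof
      fix xs assume "xs \<in> arr {1..n} {}"
      then have "distinct xs" "set xs = {1..n}" "sorted xs" by (auto simp: arr_def ldes_sorted)
      then have "xs = sorted_list_of_set {1..n}"
        by (intro sorted_distinct_set_unique) auto
      then show "xs \<in> {sorted_list_of_set {1..n}}" by simp
    qed
    show "{sorted_list_of_set {1..n}} \<subseteq> arr {1..n} {}"
      by (simp add: arr_def ldes_sorted)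
  qed
  then show ?thesis by (simp add: dcount_arr)
qed

definition bpoly :: "nat \<Rightarrow> real poly" where
  "bpoly k = smult (1 / fact k) (\<Prod>i<k. [:- of_nat i, 1:])"

lemma poly_bpoly: "poly (bpoly k) x = x gchoose k"
  by (simp add: bpoly_def poly_prod gbinomial_prod_rev lessThan_atLeast0 divide_inverse mult.commute)

lemma poly_bpoly_nat: "poly (bpoly k) (real n) = real (n choose k)"
  by (simp add: poly_bpoly binomial_gbinomial)

lemma poly_bpoly_m1: "poly (bpoly k) (-1) = (-1) ^ k"
proof -
  have "((-1::real) gchoose k) = (-1) ^ k * ((1 + of_nat k - 1) gchoose k)"
    using gbinomial_minus[of "1::real" k] by simp
  also have "(1 + of_nat k - 1 :: real) = of_nat k" by simp
  also have "(of_nat k gchoose k :: real) = 1" by (simp flip: binomial_gbinomial)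
  finally show ?thesis by (simp add: poly_bpoly)
qed

lemma main_ind:
  "finite I \<Longrightarrow> 0 \<notin> I \<Longrightarrow> \<exists>p. (\<forall>n \<ge> Max (I \<union> {0}). poly p (real n) = real (dcount I n))
     \<and> 0 \<le> (-1) ^ Max (I \<union> {0}) * poly p (-1)
     \<and> (-1) ^ Max (I \<union> {0}) * poly p (-1) \<le> real (dcount I (Max (I \<union> {0}) + 2))"
proof (induction "card I" arbitrary: I rule: less_induct)
  case less
  show ?case
  proof (cases "I = {}")
    case True
    then show ?thesis by (intro exI[of _ "[:1:]"]) (simp add: dcount_empty)
  next
    case False
    define m where "m = Max I"
    define J where "J = I - {m}"
    have mI: "m \<in> I" using False less.prems m_def by simp
    have MI: "Max (I \<union> {0}) = m"
    proof (rule Max_eqI)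
      show "finite (I \<union> {0})" using less.prems by simp
      show "\<And>y. y \<in> I \<union> {0} \<Longrightarrow> y \<le> m" using less.prems m_def by auto
      show "m \<in> I \<union> {0}" using mI by simp
    qed
    have m1: "1 \<le> m" using mI less.prems by (cases m) auto
    have Ieq: "I = insert m J" using mI J_def by auto
    have finJ: "finite J" and J0: "0 \<notin> J" using less.prems J_def by auto
    have Jlt: "\<And>j. j \<in> J \<Longrightarrow> j < m"
    proof -
      fix j assume "j \<in> J"
      then have "j \<le> m" "j \<noteq> m" using less.prems J_def m_def by auto
      then show "j < m" by simp
    qed
    have Jsub: "J \<subseteq> {1..<m}" 
    proof
      fix x assume "x \<in> J"
      have "x \<noteq> 0"
      proof
        assume "x = 0"
        with \<open>x \<in> J\<close> have "0 \<in> J" by simp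
        with J0 show False by contradiction
      qed
      moreover have "x < m" using Jlt \<open>x \<in> J\<close> by blast
      ultimately show "x \<in> {1..<m}" by simp
    qed
    have cJ: "card J < card I" unfolding J_def by (rule card_Diff1_less[OF less.prems(1) mI])
    define m' where "m' = Max (J \<union> {0})"
    have m'm: "m' < m"
    proof -
      have "finite (J \<union> {0})" using finJ by simp
      moreover have "\<forall>x\<in>J \<union> {0}. x < m" using Jlt m1 by auto
      ultimately show ?thesis unfolding m'_def by simp
    qed
    obtain q where q1: "\<forall>n \<ge> m'. poly q (real n) = real (dcount J n)"
      and q2: "0 \<le> (-1) ^ m' * poly q (-1)"
      and q3: "(-1) ^ m' * poly q (-1) \<le> real (dcount J (m' + 2))"
      using less.hyps[OF cJ finJ J0] unfolding m'_def by blast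
    define a where "a = dcount J m"
    define p where "p = smult (real a) (bpoly m) - q"
    have rec: "\<And>n. m \<le> n \<Longrightarrow> dcount I n + dcount J n = (n choose m) * a"
      unfolding Ieq a_def using recur[OF Jsub] by blast
    have P1: "\<forall>n \<ge> m. poly p (real n) = real (dcount I n)"
    proof (intro allI impI)
      fix n assume "m \<le> n"
      then have "poly q (real n) = real (dcount J n)" using q1 m'm by auto
      moreover have "real (dcount I n) + real (dcount J n) = real (n choose m) * real a"
        using rec[OF \<open>m \<le> n\<close>] by (metis of_nat_add of_nat_mult)
      ultimately show "poly p (real n) = real (dcount I n)"
        unfolding p_def by (simp add: poly_bpoly_nat algebra_simps)
    qed
    define F where "F = (-1) ^ m' * poly q (-1 :: real)"
    have sgn: "(-1::real) ^ m = (-1) ^ (m - m') * (-1) ^ m'"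
    proof -
      have "m = (m - m') + m'" using m'm by simp
      then show ?thesis by (metis power_add)
    qed
    have fval: "(-1) ^ m * poly p (-1) = real a - (-1) ^ (m - m') * F"
    proof -
      have "(-1) ^ m * poly p (-1) = (-1) ^ m * (real a * (-1) ^ m - poly q (-1))"
        unfolding p_def by (simp add: poly_bpoly_m1)
      also have "\<dots> = real a * ((-1) ^ m * (-1) ^ m) - (-1) ^ m * poly q (-1)"
        by (simp add: algebra_simps)
      also have "(-1::real) ^ m * (-1) ^ m = 1"
        by (simp flip: power_mult_distrib)
      also have "(-1::real) ^ m * poly q (-1) = (-1) ^ (m - m') * F"
        unfolding F_def sgn by (simp add: algebra_simps)
      finally show ?thesis by simp
    qed
    have A: "dcount J (m + 1) \<le> m * a"
    proof -
      have "dcount I (m+1) + dcount J (m+1) = (m+1) * a" using rec[of "m+1"] by simp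
      moreover have "(m choose m) * a \<le> dcount I (m+1)"
        unfolding Ieq a_def using lower[OF Jsub m1, of "m+1"] by simp
      ultimately show ?thesis by simp
    qed
    have B: "(m + 1) * a \<le> dcount I (m + 2)"
      unfolding Ieq a_def using lower[OF Jsub m1, of "m+2"] by simp
    have F0: "0 \<le> F" using q2 F_def by simp
    have F1: "F \<le> real (dcount J (m' + 2))" using q3 F_def by simp
    have C1: "dcount J (m' + 2) \<le> dcount J (m + 1)" using m'm by (intro dcount_mono) simp
    have "0 \<le> (-1) ^ m * poly p (-1) \<and> (-1) ^ m * poly p (-1) \<le> real (dcount I (m + 2))"
    proof (cases "even (m - m')")
      case True
      then have "m' + 2 \<le> m" using m'm by presburger
      then have "dcount J (m' + 2) \<le> a" unfolding a_def by (rule dcount_mono)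
      then have "F \<le> real a" using F1 by linarith
      moreover have "real a \<le> real (dcount I (m + 2))"
      proof -
        have "a \<le> (m + 1) * a" by simp
        then have "a \<le> dcount I (m + 2)" using B by linarith
        then show ?thesis by simp
      qed
      ultimately show ?thesis using fval True F0 by simp
    next
      case False
      have "F \<le> real (m * a)" using F1 C1 A by linarith
      then have "real a + F \<le> real ((m + 1) * a)" by simp
      then have "real a + F \<le> real (dcount I (m + 2))" using B by linarith
      then show ?thesis using fval False F0 by simp
    qed
    then show ?thesis using P1 MI by (intro exI[of _ p]) simp
  qed
qed

lemma poly_unique:
  fixes p p' :: "real poly" and M :: nat
  assumes "\<forall>n > M. poly p (real n) = c n" and "\<forall>n > M. poly p' (real n) = c n"
  shows "p = p'"
proof (rule ccontr)
  assume "p \<noteq> p'"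
  then have "p - p' \<noteq> 0" by simp
  then have fin: "finite {x. poly (p - p') x = 0}" by (rule poly_roots_finite)
  have "real ` {M<..} \<subseteq> {x. poly (p - p') x = 0}" using assms by auto
  then have "finite (real ` {M<..})" using fin finite_subset by blast
  then have "finite {M<..}" using finite_imageD inj_on_of_nat by blast
  moreover have "\<not> finite {M<..}"
    using infinite_Ioi by blast
  ultimately show False by blast
qed

theorem proposition3p10:
  fixes I :: "nat set"
  assumes "finite I" and "0 \<notin> I"
  defines "m \<equiv> Max (I \<union> {0})"
  shows "(-1) ^ m * poly (descent_poly I) (-1) \<ge> (0::real)"
proof -
  obtain p where p1: "\<forall>n \<ge> m. poly p (real n) = real (dcount I n)"
    and p2: "0 \<le> (-1) ^ m * poly p (-1)"
    using main_ind[OF assms(1,2)] unfolding m_def by blast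
  have "descent_poly I = p"
    unfolding descent_poly_def
  proof (rule the_equality)
    show "\<forall>n > Max (I \<union> {0}). poly p (real n) = real (dcount I n)" using p1 m_def by auto
    fix p' assume "\<forall>n > Max (I \<union> {0}). poly p' (real n) = real (dcount I n)"
    then show "p' = p" using p1 unfolding m_def by (intro poly_unique[of "Max (I \<union> {0})"]) auto
  qed
  then show ?thesis using p2 by simp
qed


end
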